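(* Let $N\in\mathbb N$, $\alpha,\beta>-1$, let $x_0<\dots<x_N$ be the Jacobi–Gauss–Lobatto (JGL) nodes and $h_0,\dots,h_N$ the associated Lagrange basis polynomials. For every $\mu>0$ and every $u\in\mathcal P_N$ one has $\hat I_-^\mu u\in\mathcal P_N$ and ${}^R\hat D_-^\mu u\in\mathcal P_N$ (after continuous extension to $x=-1$). Moreover $$ {}_0\mathcal P_N=\operatorname{span}\{\hat I_-^\mu h_j:\ 1\le j\le N\}. $$
   Context: For $\rho>0$ and $x\in(-1,1)$, $(I_-^\rho u)(x)=\frac{1}{\Gamma(\rho)}\int_{-1}^x (x-y)^{\rho-1}u(y)\,dy$, and $D^k=d^k/dx^k$. For $\mu\in(k-1,k)$, $k\in\mathbb N$, the Riemann–Liouville derivative is ${}^R D_-^\mu u=D^k(I_-^{k-\mu}u)$. The modified operators are $\hat I_-^\mu u=(1+x)^{-\mu}I_-^\mu u$ and ${}^R\hat D_-^\mu u=(1+x)^{\mu}\,{}^R D_-^\mu u$. $\mathcal P_N$ denotes polynomials of degree $\le N$ and ${}_0\mathcal P_N=\{\phi\in\mathcal P_N:\phi(-1)=0\}$. Jacobi polynomials $P_n^{(\alpha,\beta)}$ are in Szegő's normalization. The JGL nodes $x_0<x_1<\dots<x_N$ are the zeros of $(1-x^2)\frac{d}{dx}P_N^{(\alpha,\beta)}(x)$ (so $x_0=-1$, $x_N=1$), and $h_j\in\mathcal P_N$ is the Lagrange basis polynomial with $h_j(x_i)=\delta_{ij}$, $0\le i,j\le N$. *)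

theory Defs
  imports "HOL-Analysis.Analysis" "HOL-Computational_Algebra.Polynomial"
begin

text \<open>Jacobi polynomial in Szego's normalization (Szego, formula 4.3.2):
  P_n^(a,b)(x) = sum_k C(n+a, n-k) C(n+b, k) ((x-1)/2)^k ((x+1)/2)^(n-k).\<close>
definition jacobi_poly :: "nat \<Rightarrow> real \<Rightarrow> real \<Rightarrow> real poly" where
  "jacobi_poly n a b =
     (\<Sum>k\<le>n. smult (((real n + a) gchoose (n - k)) * ((real n + b) gchoose k))
                   ([:-1/2, 1/2:] ^ k * [:1/2, 1/2:] ^ (n - k)))"

definition frac_int :: "real \<Rightarrow> (real \<Rightarrow> real) \<Rightarrow> real \<Rightarrow> real" where
  "frac_int \<rho> u x =
     (if \<rho> = 0 then u x
      else (LBINT y:{-1..x}. (x - y) powr (\<rho> - 1) * u y) / Gamma \<rho>)"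

text \<open>Riemann-Liouville derivative D^k (I^(k-mu) u) with k = ceiling mu
  (so mu in (k-1,k) for non-integer mu; for integer mu this is the ordinary derivative).\<close>
definition rl_deriv :: "real \<Rightarrow> (real \<Rightarrow> real) \<Rightarrow> real \<Rightarrow> real" where
  "rl_deriv \<mu> u = (deriv ^^ nat \<lceil>\<mu>\<rceil>) (frac_int (of_int \<lceil>\<mu>\<rceil> - \<mu>) u)"

definition hat_frac_int :: "real \<Rightarrow> (real \<Rightarrow> real) \<Rightarrow> real \<Rightarrow> real" where
  "hat_frac_int \<mu> u x = (1 + x) powr (-\<mu>) * frac_int \<mu> u x"

definition hat_rl_deriv :: "real \<Rightarrow> (real \<Rightarrow> real) \<Rightarrow> real \<Rightarrow> real" where
  "hat_rl_deriv \<mu> u x = (1 + x) powr \<mu> * rl_deriv \<mu> u x"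

end

theory Submission
  imports Defs
begin


lemma mono_has_int:
  fixes \<rho> x :: real
  assumes rho: "\<rho> > 0" and x: "x > -1"
  shows "((\<lambda>y. (x - y) powr (\<rho> - 1) * (1 + y) ^ m) has_integral
           (Beta (real m + 1) \<rho> * (1 + x) powr (real m + \<rho>))) {-1..x}"
proof -
  define L where "L = 1 + x"
  have L: "L > 0" using x by (simp add: L_def)
  define F where "F = (\<lambda>s::real. s powr (real m + 1 - 1) * (1 - s) powr (\<rho> - 1))"
  have hF: "(F has_integral Beta (real m + 1) \<rho>) (cbox 0 1)"
    unfolding F_def using has_integral_Beta_real[of "real m + 1" \<rho>] rho by simp
  have "((\<lambda>y. F ((1/L) *\<^sub>R y + 1/L)) has_integral (Beta (real m + 1) \<rho> /\<^sub>R (1/L) ^ DIM(real)))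
           (cbox ((0 - 1/L) /\<^sub>R (1/L)) ((1 - 1/L) /\<^sub>R (1/L)))"
    by (rule has_integral_affinity'[OF hF]) (use L in simp)
  also have "cbox ((0 - 1/L) /\<^sub>R (1/L)) ((1 - 1/L) /\<^sub>R (1/L)) = {-1..x}"
    using L by (simp add: L_def field_simps)
  finally have h1: "((\<lambda>y. F (y / L + 1/L)) has_integral (Beta (real m + 1) \<rho> * L)) {-1..x}"
    by (simp add: mult.commute)
  have h2: "((\<lambda>y. L powr (real m + \<rho> - 1) * F (y / L + 1/L)) has_integral
      (L powr (real m + \<rho> - 1) * (Beta (real m + 1) \<rho> * L))) {-1..x}"
    by (rule has_integral_mult_right[OF h1])
  have eqc: "L powr (real m + \<rho> - 1) * (Beta (real m + 1) \<rho> * L) = Beta (real m + 1) \<rho> * (1 + x) powr (real m + \<rho>)"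
  proof -
    have "L powr (real m + \<rho> - 1) * L = L powr (real m + \<rho>)"
      using L by (simp add: powr_diff)
    thus ?thesis by (simp add: L_def mult_ac)
  qed
  show ?thesis
  proof (rule has_integral_spike_finite[of "{-1}", OF _ _ h2[unfolded eqc]])
    fix y assume y: "y \<in> {-1..x} - {-1}"
    hence y1: "1 + y > 0" and y2: "x - y \<ge> 0" by auto
    have a: "y / L + 1 / L = (1 + y) / L" by (simp add: add_divide_distrib)
    have b: "1 - (1 + y) / L = (x - y) / L" using L by (simp add: L_def field_simps)
    have "F (y / L + 1/L) = (1 + y) ^ m / L powr real m * ((x - y) powr (\<rho> - 1) / L powr (\<rho> - 1))"
      unfolding F_def a b using y1 by (simp add: powr_divide powr_realpow)
    moreover have "L powr (real m + \<rho> - 1) = L powr real m * L powr (\<rho> - 1)"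
      by (simp add: powr_add[symmetric] algebra_simps)
    ultimately show "(x - y) powr (\<rho> - 1) * (1 + y) ^ m = L powr (real m + \<rho> - 1) * F (y / L + 1 / L)"
      using L by (simp add: field_simps)
  qed simp
qed

lemma mono_set_integrable:
  fixes \<rho> x :: real
  assumes rho: "\<rho> > 0" and x: "x > -1"
  shows "set_integrable lborel {-1..x} (\<lambda>y. (x - y) powr (\<rho> - 1) * (1 + y) ^ m)"
proof -
  have "(\<lambda>y. (x - y) powr (\<rho> - 1) * (1 + y) ^ m) absolutely_integrable_on {-1..x}"
    by (rule nonnegative_absolutely_integrable_1)
       (use mono_has_int[OF rho x, of m] in \<open>auto simp: integrable_on_def\<close>)
  hence "integrable lebesgue (\<lambda>y. indicator {-1..x} y *\<^sub>R ((x - y) powr (\<rho> - 1) * (1 + y) ^ m))"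
    by (simp add: set_integrable_def)
  thus ?thesis unfolding set_integrable_def
    by (subst (asm) integrable_completion) measurable
qed

lemma set_integrable_sum':
  fixes f :: "'i \<Rightarrow> real \<Rightarrow> real"
  assumes "finite M" "\<And>m. m \<in> M \<Longrightarrow> set_integrable lborel S (f m)"
  shows "set_integrable lborel S (\<lambda>y. \<Sum>m\<in>M. f m y)"
  unfolding set_integrable_def scaleR_sum_right
  by (rule Bochner_Integration.integrable_sum) (use assms in \<open>auto simp: set_integrable_def\<close>)

lemma poly_sum_le:
  fixes p :: "real poly"
  assumes "degree p \<le> n"
  shows "poly p z = (\<Sum>i\<le>n. coeff p i * z ^ i)"
proof -
  have "poly p z = (\<Sum>i\<le>degree p. coeff p i * z ^ i)" by (rule poly_altdef)
  also have "\<dots> = (\<Sum>i\<le>n. coeff p i * z ^ i)"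
    by (rule sum.mono_neutral_left) (use assms in \<open>auto simp: coeff_eq_0\<close>)
  finally show ?thesis .
qed

definition bco :: "real poly \<Rightarrow> nat \<Rightarrow> real" where
  "bco u m = coeff (pcompose u [:-1, 1:]) m"

lemma poly_shift_sum:
  fixes u :: "real poly"
  assumes "degree u \<le> n"
  shows "poly u y = (\<Sum>m\<le>n. bco u m * (1 + y) ^ m)"
proof -
  have "poly u y = poly (pcompose u [:-1, 1:]) (1 + y)" by (simp add: poly_pcompose)
  also have "\<dots> = (\<Sum>m\<le>n. bco u m * (1 + y) ^ m)" unfolding bco_def
    by (rule poly_sum_le) (use assms in \<open>simp add: degree_pcompose\<close>)
  finally show ?thesis .
qed

definition cc :: "real \<Rightarrow> nat \<Rightarrow> real" where
  "cc \<rho> m = Gamma (real m + 1) / Gamma (real m + 1 + \<rho>)"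

lemma cc_pos: "\<rho> \<ge> 0 \<Longrightarrow> cc \<rho> m > 0"
  unfolding cc_def by (intro divide_pos_pos Gamma_real_pos) auto

lemma cc_0: "cc 0 m = 1"
proof -
  have "Gamma (real m + 1) > 0" by (rule Gamma_real_pos) simp
  thus ?thesis unfolding cc_def by (metis add_0_right divide_self less_irrefl)
qed

lemma frac_int_poly:
  fixes \<rho> x :: real and u :: "real poly"
  assumes rho: "\<rho> > 0" and x: "x > -1" and deg: "degree u \<le> n"
  shows "frac_int \<rho> (poly u) x = (\<Sum>m\<le>n. bco u m * cc \<rho> m * (1 + x) powr (real m + \<rho>))"
proof -
  define g where "g = (\<lambda>y. \<Sum>m\<le>n. bco u m * ((x - y) powr (\<rho> - 1) * (1 + y) ^ m))"
  have geq: "(x - y) powr (\<rho> - 1) * poly u y = g y" for y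
    unfolding g_def poly_shift_sum[OF deg, of y] by (simp add: sum_distrib_left mult_ac)
  have hg: "(g has_integral (\<Sum>m\<le>n. bco u m * (Beta (real m + 1) \<rho> * (1 + x) powr (real m + \<rho>)))) {-1..x}"
    unfolding g_def by (intro has_integral_sum has_integral_mult_right mono_has_int rho x) auto
  have ig: "set_integrable lborel {-1..x} g"
    unfolding g_def by (intro set_integrable_sum' set_integrable_mult_right mono_set_integrable rho x) auto
  have "(LBINT y:{-1..x}. (x - y) powr (\<rho> - 1) * poly u y) = (LBINT y:{-1..x}. g y)"
    by (simp add: geq)
  also have "\<dots> = integral {-1..x} g" by (rule set_borel_integral_eq_integral(2)[OF ig])
  also have "\<dots> = (\<Sum>m\<le>n. bco u m * (Beta (real m + 1) \<rho> * (1 + x) powr (real m + \<rho>)))"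
    by (rule integral_unique[OF hg])
  finally have I: "(LBINT y:{-1..x}. (x - y) powr (\<rho> - 1) * poly u y) = \<dots>" .
  have G: "Gamma \<rho> \<noteq> 0" using Gamma_real_pos[OF rho] by simp
  have B: "Beta (real m + 1) \<rho> / Gamma \<rho> = cc \<rho> m" for m
    unfolding Beta_def cc_def using G by (simp add: add_ac)
  show ?thesis
    unfolding frac_int_def using rho I
    by (simp add: sum_divide_distrib B[symmetric] mult_ac)
qed

definition Sf :: "(nat \<Rightarrow> real) \<Rightarrow> nat \<Rightarrow> real \<Rightarrow> real \<Rightarrow> real" where
  "Sf d n s t = (\<Sum>m\<le>n. d m * (1 + t) powr (real m + s))"

lemma frac_int_poly':
  fixes \<rho> x :: real and u :: "real poly"
  assumes rho: "\<rho> \<ge> 0" and x: "x > -1" and deg: "degree u \<le> n"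
  shows "frac_int \<rho> (poly u) x = Sf (\<lambda>m. bco u m * cc \<rho> m) n \<rho> x"
proof (cases "\<rho> = 0")
  case True
  have "frac_int \<rho> (poly u) x = poly u x" using True by (simp add: frac_int_def)
  also have "\<dots> = (\<Sum>m\<le>n. bco u m * (1 + x) ^ m)" by (rule poly_shift_sum[OF deg])
  also have "\<dots> = Sf (\<lambda>m. bco u m * cc \<rho> m) n \<rho> x"
    unfolding Sf_def using True x by (simp add: cc_0 powr_realpow)
  finally show ?thesis .
next
  case False
  thus ?thesis using frac_int_poly[of \<rho> x u n] rho x deg by (simp add: Sf_def mult_ac)
qed

lemma deriv_Sf:
  assumes "\<And>t. t > -1 \<Longrightarrow> F t = Sf d n s t"
  shows "t > -1 \<Longrightarrow> (deriv ^^ j) F t = Sf (\<lambda>m. d m * (\<Prod>i<j. real m + s - real i)) n (s - real j) t"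
proof (induction j arbitrary: t)
  case 0
  then show ?case using assms by simp
next
  case (Suc j)
  define d' where "d' = (\<lambda>m. d m * (\<Prod>i<j. real m + s - real i))"
  have ev: "eventually (\<lambda>y. (deriv ^^ j) F y = Sf d' n (s - real j) y) (nhds t)"
  proof -
    have "eventually (\<lambda>y. y \<in> {-1<..}) (nhds t)"
      using Suc.prems by (intro eventually_nhds_in_open) auto
    thus ?thesis by eventually_elim (use Suc.IH in \<open>auto simp: d'_def\<close>)
  qed
  have D: "(Sf d' n (s - real j) has_real_derivative
      (\<Sum>m\<le>n. d' m * ((real m + (s - real j)) * (1 + t) powr (real m + (s - real j) - 1)))) (at t)"
    unfolding Sf_def using Suc.prems
    by (auto intro!: derivative_eq_intros sum.cong simp: mult_ac)
  have "(deriv ^^ Suc j) F t = deriv ((deriv ^^ j) F) t" by simp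
  also have "\<dots> = deriv (Sf d' n (s - real j)) t" by (rule deriv_cong_ev[OF ev refl])
  also have "\<dots> = (\<Sum>m\<le>n. d' m * ((real m + (s - real j)) * (1 + t) powr (real m + (s - real j) - 1)))"
    by (rule DERIV_imp_deriv[OF D])
  also have "\<dots> = Sf (\<lambda>m. d m * (\<Prod>i<Suc j. real m + s - real i)) n (s - real (Suc j)) t"
    unfolding Sf_def d'_def by (intro sum.cong refl) (simp add: algebra_simps)
  finally show ?case .
qed

lemma Sf_poly:
  assumes t: "t > -1"
  shows "(1 + t) powr (- s) * Sf d n s t = poly (pcompose (\<Sum>m\<le>n. monom (d m) m) [:1, 1:]) t"
proof -
  have "(1 + t) powr (- s) * Sf d n s t = (\<Sum>m\<le>n. d m * (1 + t) ^ m)"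
    unfolding Sf_def sum_distrib_left
  proof (intro sum.cong refl)
    fix m
    have "(1 + t) powr (- s) * (1 + t) powr (real m + s) = (1 + t) powr (real m)"
      by (simp add: powr_add[symmetric])
    also have "\<dots> = (1 + t) ^ m" using t by (simp add: powr_realpow)
    finally show "(1 + t) powr - s * (d m * (1 + t) powr (real m + s)) = d m * (1 + t) ^ m"
      by (simp add: mult_ac)
  qed
  also have "\<dots> = poly (pcompose (\<Sum>m\<le>n. monom (d m) m) [:1, 1:]) t"
    by (simp add: poly_pcompose poly_sum poly_monom add_ac)
  finally show ?thesis .
qed

lemma degree_Sf_poly: "degree (pcompose (\<Sum>m\<le>n. monom (d m) m) [:1, 1::real:]) \<le> n"
proof -
  have "degree (\<Sum>m\<le>n. monom (d m) m) \<le> n"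
    by (rule degree_sum_le) (auto intro: order.trans[OF degree_monom_le])
  thus ?thesis by (simp add: degree_pcompose)
qed

definition Tp :: "real \<Rightarrow> nat \<Rightarrow> real poly \<Rightarrow> real poly" where
  "Tp \<mu> N u = pcompose (\<Sum>m\<le>N. monom (bco u m * cc \<mu> m) m) [:1, 1:]"

lemma hat_frac_int_Tp:
  assumes mu: "\<mu> > 0" and t: "t > -1" and deg: "degree u \<le> N"
  shows "hat_frac_int \<mu> (poly u) t = poly (Tp \<mu> N u) t"
  unfolding hat_frac_int_def Tp_def frac_int_poly'[OF less_imp_le[OF mu] t deg]
  by (rule Sf_poly[OF t])

lemma degree_Tp: "degree (Tp \<mu> N u) \<le> N"
  unfolding Tp_def by (rule degree_Sf_poly)

lemma poly_Tp: "poly (Tp \<mu> N u) t = (\<Sum>m\<le>N. bco u m * cc \<mu> m * (1 + t) ^ m)"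
  unfolding Tp_def by (simp add: poly_pcompose poly_sum poly_monom add_ac)

lemma bco_sum: "bco (\<Sum>j\<in>J. smult (c j) (h j)) m = (\<Sum>j\<in>J. c j * bco (h j) m)"
  unfolding bco_def by (simp add: pcompose_sum pcompose_smult coeff_sum)

lemma poly_Tp_sum:
  "poly (Tp \<mu> N (\<Sum>j\<in>J. smult (c j) (h j))) t = (\<Sum>j\<in>J. c j * poly (Tp \<mu> N (h j)) t)"
  unfolding poly_Tp bco_sum sum_distrib_left sum_distrib_right
  by (subst sum.swap) (simp add: mult_ac)

lemma bco_0: "bco u 0 = poly u (-1)"
  unfolding bco_def by (simp add: poly_0_coeff_0[symmetric] poly_pcompose)

lemma poly_Tp_m1: "poly (Tp \<mu> N u) (-1) = poly u (-1) * cc \<mu> 0"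
  unfolding poly_Tp by (simp add: bco_0 zero_power)

lemma poly_eq_on_Ioo:
  fixes p q :: "real poly"
  assumes "\<And>t. t \<in> {-1<..<1} \<Longrightarrow> poly p t = poly q t"
  shows "p = q"
proof (rule ccontr)
  assume "p \<noteq> q"
  hence "p - q \<noteq> 0" by simp
  hence "finite {t. poly (p - q) t = 0}" by (rule poly_roots_finite)
  moreover have "{-1<..<1::real} \<subseteq> {t. poly (p - q) t = 0}" using assms by auto
  ultimately have "finite {-1<..<1::real}" by (rule finite_subset[rotated])
  thus False using infinite_Ioo[of "-1::real" 1] by simp
qed

lemma Tp_inverse:
  fixes p :: "real poly"
  assumes mu: "\<mu> > 0" and deg: "degree p \<le> N" and p1: "poly p (-1) = 0"
  shows "\<exists>u. degree u \<le> N \<and> poly u (-1) = 0 \<and> Tp \<mu> N u = p"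
proof -
  define v where "v = (\<Sum>m\<le>N. monom (bco p m / cc \<mu> m) m)"
  define u where "u = pcompose v [:1, 1:]"
  have cv: "coeff v m = bco p m / cc \<mu> m" if "m \<le> N" for m
    unfolding v_def by (rule coeff_sum_monom[OF that])
  have "pcompose [:1, 1::real:] [:-1, 1:] = [:0, 1:]"
    by (simp add: pcompose_pCons)
  hence bu: "bco u m = coeff v m" for m
    unfolding bco_def u_def by (simp add: pcompose_assoc[symmetric])
  have degv: "degree v \<le> N" unfolding v_def
    by (rule degree_sum_le) (auto intro: order.trans[OF degree_monom_le])
  have degu: "degree u \<le> N" unfolding u_def using degv by (simp add: degree_pcompose)
  have ccne: "cc \<mu> m \<noteq> 0" for m using cc_pos[of \<mu> m] mu by simp
  have "poly (Tp \<mu> N u) t = poly p t" for t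
  proof -
    have "poly (Tp \<mu> N u) t = (\<Sum>m\<le>N. bco p m * (1 + t) ^ m)"
      unfolding poly_Tp bu by (intro sum.cong refl) (simp add: cv ccne)
    also have "\<dots> = poly p t" by (rule poly_shift_sum[OF deg, symmetric])
    finally show ?thesis .
  qed
  hence "Tp \<mu> N u = p" by (simp add: poly_eq_poly_eq_iff[symmetric] fun_eq_iff)
  moreover have "poly u (-1) = 0"
  proof -
    have "poly u (-1) = coeff v 0" unfolding u_def by (simp add: poly_pcompose poly_0_coeff_0)
    also have "\<dots> = 0" using cv[of 0] p1 by (simp add: bco_0)
    finally show ?thesis .
  qed
  ultimately show ?thesis using degu by blast
qed



lemma gchoose_pos:
  fixes a :: real
  assumes "a > real n - 1"
  shows "a gchoose n > 0"
  unfolding gbinomial_pochhammer' using assms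
  by (intro divide_pos_pos pochhammer_pos) auto

lemma sgn_pow: "(-1::real) ^ (i + j) * (A ^ i * B ^ j) = (-A) ^ i * (-B) ^ j"
  by (simp only: power_minus[of A] power_minus[of B] power_add mult_ac)

lemma termD: "((\<lambda>y::real. c * ((y / 2 - 1/2) ^ k * (y / 2 + 1/2) ^ (N - k))) has_real_derivative
   c * ((real k * (t / 2 - 1/2) ^ (k - 1) * (t / 2 + 1/2) ^ (N - k) + real (N - k) * (t / 2 - 1/2) ^ k * (t / 2 + 1/2) ^ (N - k - 1)) / 2)) (at t)"
  by (auto intro!: derivative_eq_intros simp: algebra_simps)

lemma jacobi_deriv_nonzero:
  fixes a b t :: real
  assumes N: "N \<ge> 1" and a: "a > -1" and b: "b > -1" and t: "t < -1"
  shows "poly (pderiv (jacobi_poly N a b)) t \<noteq> 0"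
proof -
  define c where "c = (\<lambda>k. ((real N + a) gchoose (N - k)) * ((real N + b) gchoose k))"
  define A where "A = t / 2 - 1 / 2"
  define B where "B = t / 2 + 1 / 2"
  have A: "A < 0" and B: "B < 0" using t by (auto simp: A_def B_def)
  have cpos: "c k > 0" if "k \<le> N" for k
    unfolding c_def using that a b
    by (intro mult_pos_pos gchoose_pos) (auto simp: of_nat_diff)
  have pJ: "poly (jacobi_poly N a b) = (\<lambda>y. \<Sum>k\<le>N. c k * ((y / 2 - 1/2) ^ k * (y / 2 + 1/2) ^ (N - k)))"
    unfolding jacobi_poly_def c_def fun_eq_iff poly_sum
    by (intro allI sum.cong refl) (simp add: poly_power add_ac)
  define D where "D = (\<Sum>k\<le>N. c k * ((real k * A ^ (k - 1) * B ^ (N - k) + real (N - k) * A ^ k * B ^ (N - k - 1)) / 2))"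
  have "((\<lambda>y. \<Sum>k\<le>N. c k * ((y / 2 - 1/2) ^ k * (y / 2 + 1/2) ^ (N - k))) has_real_derivative D) (at t)"
    unfolding D_def A_def B_def by (rule DERIV_sum) (rule termD)
  moreover have "((\<lambda>y. poly (jacobi_poly N a b) y) has_real_derivative poly (pderiv (jacobi_poly N a b)) t) (at t)"
    by (rule poly_DERIV)
  ultimately have eq: "poly (pderiv (jacobi_poly N a b)) t = D"
    unfolding pJ by (rule DERIV_unique[rotated])
  have X: "(-1) ^ (N - 1) * (real k * A ^ (k - 1) * B ^ (N - k)) \<ge> 0" if "k \<le> N" for k
  proof (cases "k = 0")
    case False
    hence "N - 1 = (k - 1) + (N - k)" using that by simp
    hence "(-1) ^ (N - 1) * (A ^ (k - 1) * B ^ (N - k)) = (-A) ^ (k - 1) * (-B) ^ (N - k)"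
      by (simp only: sgn_pow)
    moreover have "(-A) ^ (k - 1) * (-B) ^ (N - k) > 0" by (intro mult_pos_pos zero_less_power) (use A B in auto)
    ultimately show ?thesis by (simp add: mult_ac)
  qed simp
  have Y: "(-1) ^ (N - 1) * (real (N - k) * A ^ k * B ^ (N - k - 1)) \<ge> 0" if "k \<le> N" for k
  proof (cases "k = N")
    case False
    hence "N - 1 = k + (N - k - 1)" using that by simp
    hence "(-1) ^ (N - 1) * (A ^ k * B ^ (N - k - 1)) = (-A) ^ k * (-B) ^ (N - k - 1)"
      by (simp only: sgn_pow)
    moreover have "(-A) ^ k * (-B) ^ (N - k - 1) > 0" by (intro mult_pos_pos zero_less_power) (use A B in auto)
    ultimately have P: "(-1) ^ (N - 1) * (A ^ k * B ^ (N - k - 1)) > 0" by simp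
    have e: "(-1) ^ (N - 1) * (real (N - k) * A ^ k * B ^ (N - k - 1)) = real (N - k) * ((-1) ^ (N - 1) * (A ^ k * B ^ (N - k - 1)))"
      by (simp only: mult_ac)
    show ?thesis unfolding e using P by (intro mult_nonneg_nonneg[OF of_nat_0_le_iff less_imp_le])
  qed simp
  have Y0: "(-1) ^ (N - 1) * (real (N - 0) * A ^ 0 * B ^ (N - 0 - 1)) > 0"
  proof -
    have "(-1) ^ (N - 1) * B ^ (N - 1) = (-B) ^ (N - 1)" by (simp only: power_minus[of B])
    moreover have "(-B) ^ (N - 1) > 0" by (intro zero_less_power) (use B in auto)
    ultimately show ?thesis using N by (simp add: mult_ac)
  qed
  have "(-1) ^ (N - 1) * D = (\<Sum>k\<le>N. c k * ((-1) ^ (N - 1) * (real k * A ^ (k - 1) * B ^ (N - k))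
        + (-1) ^ (N - 1) * (real (N - k) * A ^ k * B ^ (N - k - 1))) / 2)"
    unfolding D_def sum_distrib_left by (intro sum.cong refl) (simp add: algebra_simps)
  also have "\<dots> > 0"
  proof (rule sum_pos2[of _ 0])
    show "0 < c 0 * ((-1) ^ (N - 1) * (real 0 * A ^ (0 - 1) * B ^ (N - 0))
        + (-1) ^ (N - 1) * (real (N - 0) * A ^ 0 * B ^ (N - 0 - 1))) / 2"
      using cpos[of 0] Y0 by (intro divide_pos_pos mult_pos_pos) auto
    fix k assume "k \<in> {..N}"
    hence kN: "k \<le> N" by simp
    show "0 \<le> c k * ((-1) ^ (N - 1) * (real k * A ^ (k - 1) * B ^ (N - k))
        + (-1) ^ (N - 1) * (real (N - k) * A ^ k * B ^ (N - k - 1))) / 2"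
      by (rule divide_nonneg_pos[OF mult_nonneg_nonneg[OF less_imp_le[OF cpos[OF kN]] add_nonneg_nonneg[OF X[OF kN] Y[OF kN]]]]) simp
  qed auto
  finally show ?thesis unfolding eq by auto
qed


lemma lagrange_rep:
  fixes N :: nat and x :: "nat \<Rightarrow> real" and h :: "nat \<Rightarrow> real poly" and u :: "real poly"
  assumes x_mono: "strict_mono_on {0..N} x"
    and h_deg: "\<And>j. j \<le> N \<Longrightarrow> degree (h j) \<le> N"
    and h_lag: "\<And>i j. i \<le> N \<Longrightarrow> j \<le> N \<Longrightarrow> poly (h j) (x i) = (if i = j then 1 else 0)"
    and deg: "degree u \<le> N" and u0: "poly u (x 0) = 0"
  shows "u = (\<Sum>j\<in>{1..N}. smult (poly u (x j)) (h j))"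
proof (rule ccontr)
  define r where "r = u - (\<Sum>j\<in>{1..N}. smult (poly u (x j)) (h j))"
  assume "u \<noteq> (\<Sum>j\<in>{1..N}. smult (poly u (x j)) (h j))"
  hence r0: "r \<noteq> 0" by (simp add: r_def)
  have degr: "degree r \<le> N" unfolding r_def
    by (intro degree_diff_le deg degree_sum_le order.trans[OF degree_smult_le] h_deg) auto
  have roots: "poly r (x i) = 0" if "i \<le> N" for i
  proof -
    have "(\<Sum>j\<in>{1..N}. poly u (x j) * poly (h j) (x i)) = (\<Sum>j\<in>{1..N}. if i = j then poly u (x j) else 0)"
      by (intro sum.cong refl) (use that h_lag in auto)
    also have "\<dots> = (if i \<in> {1..N} then poly u (x i) else 0)"
      by (simp add: sum.delta)
    finally show ?thesis unfolding r_def using that u0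
      by (cases "i = 0") (auto simp: poly_sum)
  qed
  have "x ` {0..N} \<subseteq> {t. poly r t = 0}" using roots by auto
  hence "card (x ` {0..N}) \<le> card {t. poly r t = 0}"
    by (intro card_mono poly_roots_finite r0)
  also have "\<dots> \<le> N" using card_poly_roots_bound[OF r0] degr by simp
  finally have "card (x ` {0..N}) \<le> N" .
  moreover have "card (x ` {0..N}) = N + 1"
    using strict_mono_on_imp_inj_on[OF x_mono] by (simp add: card_image)
  ultimately show False by simp
qed

theorem lemma3p2:
  fixes N :: nat and \<alpha> \<beta> :: real
    and x :: "nat \<Rightarrow> real" and h :: "nat \<Rightarrow> real poly"
  assumes N: "N \<ge> 1"
    and ab: "\<alpha> > -1" "\<beta> > -1"
    and x_mono: "strict_mono_on {0..N} x"
    and x_nodes: "x ` {0..N} =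
          {t. poly ([:1, 0, -1:] * pderiv (jacobi_poly N \<alpha> \<beta>)) t = 0}"
    and h_deg: "\<And>j. j \<le> N \<Longrightarrow> degree (h j) \<le> N"
    and h_lag: "\<And>i j. i \<le> N \<Longrightarrow> j \<le> N \<Longrightarrow> poly (h j) (x i) = (if i = j then 1 else 0)"
  shows "\<forall>\<mu>>0.
     (\<forall>u :: real poly. degree u \<le> N \<longrightarrow>
        (\<exists>p :: real poly. degree p \<le> N \<and>
            (\<forall>t\<in>{-1<..<1}. hat_frac_int \<mu> (poly u) t = poly p t)) \<and>
        (\<exists>p :: real poly. degree p \<le> N \<and>
            (\<forall>t\<in>{-1<..<1}. hat_rl_deriv \<mu> (poly u) t = poly p t))) \<and>
     (\<forall>p :: real poly. (degree p \<le> N \<and> poly p (-1) = 0) \<longleftrightarrow>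
        (\<exists>c :: nat \<Rightarrow> real. \<forall>t\<in>{-1<..<1}.
            poly p t = (\<Sum>j=1..N. c j * hat_frac_int \<mu> (poly (h j)) t)))"
proof -
  have x0: "x 0 = -1"
  proof -
    have "-1 \<in> {t. poly ([:1, 0, -1:] * pderiv (jacobi_poly N \<alpha> \<beta>)) t = 0}" by simp
    then obtain i where i: "i \<le> N" "x i = -1" unfolding x_nodes[symmetric] by auto
    show ?thesis
    proof (cases "i = 0")
      case False
      hence lt: "x 0 < -1" using strict_mono_onD[OF x_mono, of 0 i] i by auto
      have "x 0 \<in> {t. poly ([:1, 0, -1:] * pderiv (jacobi_poly N \<alpha> \<beta>)) t = 0}"
        unfolding x_nodes[symmetric] by auto
      hence "(1 - x 0 * x 0) * poly (pderiv (jacobi_poly N \<alpha> \<beta>)) (x 0) = 0" by (simp add: algebra_simps)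
      moreover have "1 - x 0 * x 0 \<noteq> 0"
      proof -
        have "1 * 1 < (- x 0) * (- x 0)" using lt by (intro mult_strict_mono) auto
        thus ?thesis by simp
      qed
      ultimately have "poly (pderiv (jacobi_poly N \<alpha> \<beta>)) (x 0) = 0" by simp
      with jacobi_deriv_nonzero[OF N ab lt] show ?thesis by simp
    qed (use i in simp)
  qed
  have hm1: "poly (h j) (-1) = 0" if "1 \<le> j" "j \<le> N" for j
    using h_lag[of 0 j] that x0 by simp
  show ?thesis
  proof (intro allI impI conjI)
    fix \<mu> :: real assume mu: "\<mu> > 0"
    {
      fix u :: "real poly" assume deg: "degree u \<le> N"
      show "\<exists>p. degree p \<le> N \<and> (\<forall>t\<in>{-1<..<1}. hat_frac_int \<mu> (poly u) t = poly p t)"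
        using hat_frac_int_Tp[OF mu _ deg] degree_Tp[of \<mu> N u] by (intro exI[of _ "Tp \<mu> N u"]) auto
      define k where "k = nat \<lceil>\<mu>\<rceil>"
      define \<rho> where "\<rho> = of_int \<lceil>\<mu>\<rceil> - \<mu>"
      have rho: "\<rho> \<ge> 0" unfolding \<rho>_def by linarith
      have rk: "\<rho> - real k = - \<mu>" unfolding \<rho>_def k_def using mu by simp
      define d where "d = (\<lambda>m. bco u m * cc \<rho> m)"
      define d' where "d' = (\<lambda>m. d m * (\<Prod>i<k. real m + \<rho> - real i))"
      have F: "frac_int \<rho> (poly u) t = Sf d N \<rho> t" if "t > -1" for t
        unfolding d_def by (rule frac_int_poly'[OF rho that deg])
      have "hat_rl_deriv \<mu> (poly u) t = poly (pcompose (\<Sum>m\<le>N. monom (d' m) m) [:1, 1:]) t"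
        if t: "t > -1" for t
      proof -
        have "rl_deriv \<mu> (poly u) t = Sf d' N (-\<mu>) t"
          unfolding rl_deriv_def k_def[symmetric] \<rho>_def[symmetric] d'_def rk[symmetric]
          by (rule deriv_Sf[OF F t])
        hence "hat_rl_deriv \<mu> (poly u) t = (1 + t) powr (- (- \<mu>)) * Sf d' N (-\<mu>) t"
          by (simp add: hat_rl_deriv_def)
        also have "\<dots> = poly (pcompose (\<Sum>m\<le>N. monom (d' m) m) [:1, 1:]) t"
          by (rule Sf_poly[OF t])
        finally show ?thesis .
      qed
      thus "\<exists>p. degree p \<le> N \<and> (\<forall>t\<in>{-1<..<1}. hat_rl_deriv \<mu> (poly u) t = poly p t)"
        using degree_Sf_poly[of d' N] by auto
    }
    fix p :: "real poly"
    show "(degree p \<le> N \<and> poly p (-1) = 0) \<longleftrightarrow>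
        (\<exists>c :: nat \<Rightarrow> real. \<forall>t\<in>{-1<..<1}.
            poly p t = (\<Sum>j=1..N. c j * hat_frac_int \<mu> (poly (h j)) t))"
    proof
      assume "degree p \<le> N \<and> poly p (-1) = 0"
      then obtain u where u: "degree u \<le> N" "poly u (-1) = 0" "Tp \<mu> N u = p"
        using Tp_inverse[OF mu] by blast
      have urep: "u = (\<Sum>j\<in>{1..N}. smult (poly u (x j)) (h j))"
        by (rule lagrange_rep[OF x_mono h_deg h_lag u(1)]) (use u x0 in auto)
      show "\<exists>c :: nat \<Rightarrow> real. \<forall>t\<in>{-1<..<1}.
            poly p t = (\<Sum>j=1..N. c j * hat_frac_int \<mu> (poly (h j)) t)"
      proof (intro exI ballI)
        fix t :: real assume t: "t \<in> {-1<..<1}"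
        have "(\<Sum>j=1..N. poly u (x j) * hat_frac_int \<mu> (poly (h j)) t)
            = (\<Sum>j=1..N. poly u (x j) * poly (Tp \<mu> N (h j)) t)"
          by (intro sum.cong refl) (use t h_deg hat_frac_int_Tp[OF mu] in auto)
        also have "\<dots> = poly (Tp \<mu> N u) t"
          by (subst urep) (rule poly_Tp_sum[symmetric])
        finally show "poly p t = (\<Sum>j=1..N. poly u (x j) * hat_frac_int \<mu> (poly (h j)) t)"
          using u(3) by simp
      qed
    next
      assume "\<exists>c :: nat \<Rightarrow> real. \<forall>t\<in>{-1<..<1}.
            poly p t = (\<Sum>j=1..N. c j * hat_frac_int \<mu> (poly (h j)) t)"
      then obtain c :: "nat \<Rightarrow> real" where c: "\<And>t. t\<in>{-1<..<1} \<Longrightarrow>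
            poly p t = (\<Sum>j=1..N. c j * hat_frac_int \<mu> (poly (h j)) t)" by blast
      define q where "q = Tp \<mu> N (\<Sum>j\<in>{1..N}. smult (c j) (h j))"
      have "p = q"
      proof (rule poly_eq_on_Ioo)
        fix t :: real assume t: "t \<in> {-1<..<1}"
        have "poly p t = (\<Sum>j=1..N. c j * poly (Tp \<mu> N (h j)) t)"
          unfolding c[OF t] by (intro sum.cong refl) (use t h_deg hat_frac_int_Tp[OF mu] in auto)
        also have "\<dots> = poly q t" unfolding q_def by (rule poly_Tp_sum[symmetric])
        finally show "poly p t = poly q t" .
      qed
      moreover have "degree q \<le> N" unfolding q_def by (rule degree_Tp)
      moreover have "poly q (-1) = 0"
      proof -
        have "poly (\<Sum>j\<in>{1..N}. smult (c j) (h j)) (-1) = (\<Sum>j\<in>{1..N}. c j * poly (h j) (-1))"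
          by (simp add: poly_sum)
        also have "\<dots> = 0" by (intro sum.neutral) (use hm1 in auto)
        finally show ?thesis unfolding q_def poly_Tp_m1 by simp
      qed
      ultimately show "degree p \<le> N \<and> poly p (-1) = 0" by simp
    qed
  qed
qed

end
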